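(* For every $n\in\mathbb{N}$ there exists a constant $N\in\mathbb{N}$ such that the Torrent algorithm, run on any input $X\in\mathbb{R}^{n\times d}$, $Y\in\mathbb{R}^n$, $a\in\{1,\dots,n\}$, terminates (its while-loop stops) after fewer than $N$ iterations.
   Context: For $S\subseteq\{1,\dots,n\}$, $X_S$ and $Y_S$ denote the rows/entries with indices in $S$, and $\hat\beta^S_{\mathrm{OLS}}(X,Y):=(X_S^\top X_S)^{+}X_S^\top Y_S$ ($^{+}$: Moore–Penrose inverse). For $v\in\mathbb{R}^n$ and $a\in\{1,\dots,n\}$, $\mathrm{HT}(v,a)$ is the set of indices of the $a$ smallest entries of $v$, ties broken by a fixed deterministic rule. Torrent: set $S_0=\{1,\dots,n\}$, $e=Y$, $\mathrm{err}=\infty$, $t=0$. While $\|e\|_2<\mathrm{err}$ (here $e$ is the residual vector indexed by the current set $S_t$): set $t\gets t+1$, $\mathrm{err}\gets\|e\|_2$, $\hat\beta^t\gets\hat\beta^{S_{t-1}}_{\mathrm{OLS}}(X,Y)$, $v\gets|Y-X\hat\beta^t|$ (entrywise absolute value), $S_t\gets\mathrm{HT}(v,a)$, $e\gets|Y_{S_t}-X_{S_t}\hat\beta^t|$. Return $\hat\beta^t$. *)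

theory Defs
  imports Jordan_Normal_Form.Matrix "HOL-Library.Extended_Real"
begin

text \<open>Indices are 0-based: {0,...,n-1} plays the role of {1,...,n}.\<close>

text \<open>Moore-Penrose inverse (real matrices, so conjugate transpose = transpose),
  defined by the four Penrose conditions.\<close>
definition mp_inverse :: "real mat \<Rightarrow> real mat" where
  "mp_inverse A = (THE B. B \<in> carrier_mat (dim_col A) (dim_row A) \<and>
      A * B * A = A \<and> B * A * B = B \<and>
      transpose_mat (A * B) = A * B \<and> transpose_mat (B * A) = B * A)"

definition rows_sub :: "real mat \<Rightarrow> nat set \<Rightarrow> real mat" where
  "rows_sub X S = mat (card S) (dim_col X) (\<lambda>(i, j). X $$ (sorted_list_of_set S ! i, j))"

definition vec_sub :: "real vec \<Rightarrow> nat set \<Rightarrow> real vec" where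
  "vec_sub Y S = vec (card S) (\<lambda>i. Y $ (sorted_list_of_set S ! i))"

definition ols :: "real mat \<Rightarrow> real vec \<Rightarrow> nat set \<Rightarrow> real vec" where
  "ols X Y S = mp_inverse (transpose_mat (rows_sub X S) * rows_sub X S)
                *\<^sub>v (transpose_mat (rows_sub X S) *\<^sub>v vec_sub Y S)"

text \<open>A hard-thresholding rule: HT(v,a) returns a set of a indices of smallest entries of v
  (any deterministic tie-breaking, i.e. any function with this property).\<close>
definition is_HT :: "(real vec \<Rightarrow> nat \<Rightarrow> nat set) \<Rightarrow> bool" where
  "is_HT ht \<longleftrightarrow> (\<forall>v a. 1 \<le> a \<and> a \<le> dim_vec v \<longrightarrow>
      ht v a \<subseteq> {..<dim_vec v} \<and> card (ht v a) = a \<and>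
      (\<forall>i\<in>ht v a. \<forall>j\<in>{..<dim_vec v} - ht v a. v $ i \<le> v $ j))"

text \<open>Torrent state: (err, S, e, beta), where the residual vector e is indexed by S
  (stored as a function on indices); its 2-norm is sqrt (sum over S of e_i^2).\<close>
type_synonym torrent_state = "ereal \<times> nat set \<times> (nat \<Rightarrow> real) \<times> real vec"

definition norm_on :: "nat set \<Rightarrow> (nat \<Rightarrow> real) \<Rightarrow> real" where
  "norm_on S e = sqrt (\<Sum>i\<in>S. (e i)\<^sup>2)"

definition torrent_init :: "real mat \<Rightarrow> real vec \<Rightarrow> torrent_state" where
  "torrent_init X Y = (\<infinity>, {..<dim_vec Y}, (\<lambda>i. Y $ i), 0\<^sub>v (dim_col X))"

definition torrent_cond :: "torrent_state \<Rightarrow> bool" where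
  "torrent_cond st = (case st of (err, S, e, \<beta>) \<Rightarrow> ereal (norm_on S e) < err)"

definition torrent_step :: "(real vec \<Rightarrow> nat \<Rightarrow> nat set) \<Rightarrow> real mat \<Rightarrow> real vec \<Rightarrow> nat
    \<Rightarrow> torrent_state \<Rightarrow> torrent_state" where
  "torrent_step ht X Y a st = (case st of (err, S, e, \<beta>) \<Rightarrow>
     (let err' = ereal (norm_on S e);
          \<beta>' = ols X Y S;
          v = map_vec abs (Y - X *\<^sub>v \<beta>');
          S' = ht v a;
          e' = (\<lambda>i. \<bar>Y $ i - (X *\<^sub>v \<beta>') $ i\<bar>)
      in (err', S', e', \<beta>')))"

text \<open>After t loop iterations the state is (torrent_step ...)^^t applied to the initial state;
  the loop stops at the first t with the guard false.\<close>

end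

theory Submission
  imports Defs
begin

definition EE :: "real mat \<Rightarrow> real vec \<Rightarrow> nat set \<Rightarrow> nat \<Rightarrow> real" where
  "EE X Y S = (\<lambda>i. \<bar>Y $ i - (X *\<^sub>v ols X Y S) $ i\<bar>)"

definition HH :: "(real vec \<Rightarrow> nat \<Rightarrow> nat set) \<Rightarrow> real mat \<Rightarrow> real vec \<Rightarrow> nat \<Rightarrow> nat set \<Rightarrow> nat set" where
  "HH ht X Y a S = ht (map_vec abs (Y - X *\<^sub>v ols X Y S)) a"

lemma step_eq: "torrent_step ht X Y a (err, S, e, b) =
   (ereal (norm_on S e), HH ht X Y a S, EE X Y S, ols X Y S)"
  by (simp add: torrent_step_def HH_def EE_def Let_def)

lemma S_eq: "fst (snd ((torrent_step ht X Y a ^^ k) (torrent_init X Y))) = (HH ht X Y a ^^ k) {..<dim_vec Y}"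
proof (induction k)
  case 0
  then show ?case by (simp add: torrent_init_def)
next
  case (Suc k)
  obtain err S e b where st: "(torrent_step ht X Y a ^^ k) (torrent_init X Y) = (err, S, e, b)"
    by (metis prod.exhaust)
  show ?case using Suc st by (simp add: step_eq)
qed

lemma cond_eq: "torrent_cond ((torrent_step ht X Y a ^^ Suc (Suc k)) (torrent_init X Y)) \<longleftrightarrow>
   norm_on (HH ht X Y a ((HH ht X Y a ^^ Suc k) {..<dim_vec Y})) (EE X Y ((HH ht X Y a ^^ Suc k) {..<dim_vec Y}))
   < norm_on (HH ht X Y a ((HH ht X Y a ^^ k) {..<dim_vec Y})) (EE X Y ((HH ht X Y a ^^ k) {..<dim_vec Y}))"
proof -
  obtain err S e b where st: "(torrent_step ht X Y a ^^ k) (torrent_init X Y) = (err, S, e, b)"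
    by (metis prod.exhaust)
  have "S = (HH ht X Y a ^^ k) {..<dim_vec Y}" using S_eq[where ht=ht and X=X and Y=Y and a=a and k=k] st by simp
  then show ?thesis using st by (simp add: step_eq torrent_cond_def)
qed

lemma dec_lemma:
  fixes f :: "nat \<Rightarrow> real"
  assumes "\<forall>k<m. f (Suc k) < f k"
  shows "i < j \<Longrightarrow> j \<le> m \<Longrightarrow> f j < f i"
proof (induction j)
  case 0 then show ?case by simp
next
  case (Suc j)
  have fj: "f (Suc j) < f j" using assms Suc.prems(2) by simp
  show ?case
  proof (cases "i = j")
    case True
    then show ?thesis using fj by simp
  next
    case False
    then have "i < j" using Suc.prems(1) by simp
    then have "f j < f i" using Suc.IH Suc.prems(2) by simp
    then show ?thesis using fj by simp
  qed
qed

theorem lemma3p2: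
  fixes ht :: "real vec \<Rightarrow> nat \<Rightarrow> nat set"
  assumes "is_HT ht"
  shows "\<forall>n::nat. \<exists>N::nat. \<forall>d::nat. \<forall>X Y (a::nat).
           X \<in> carrier_mat n d \<longrightarrow> Y \<in> carrier_vec n \<longrightarrow> 1 \<le> a \<longrightarrow> a \<le> n \<longrightarrow>
           (\<exists>t<N. \<not> torrent_cond ((torrent_step ht X Y a ^^ t) (torrent_init X Y)))"
proof (intro allI)
  fix n :: nat
  show "\<exists>N::nat. \<forall>d::nat. \<forall>X Y (a::nat).
           X \<in> carrier_mat n d \<longrightarrow> Y \<in> carrier_vec n \<longrightarrow> 1 \<le> a \<longrightarrow> a \<le> n \<longrightarrow>
           (\<exists>t<N. \<not> torrent_cond ((torrent_step ht X Y a ^^ t) (torrent_init X Y)))"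
  proof (rule exI[where x="2^n+2"], intro allI impI)
  fix d :: nat and X :: "real mat" and Y :: "real vec" and a :: nat
  assume X: "X \<in> carrier_mat n d" and Y: "Y \<in> carrier_vec n" and a1: "1 \<le> a" and a2: "a \<le> n"
  define T where "T k = (HH ht X Y a ^^ k) {..<n}" for k
  define G where "G S = norm_on (HH ht X Y a S) (EE X Y S)" for S
  have dY: "dim_vec Y = n" using Y by simp
  have sub: "T k \<subseteq> {..<n}" for k
  proof (induction k)
    case 0 then show ?case by (simp add: T_def)
  next
    case (Suc k)
    let ?v = "map_vec abs (Y - X *\<^sub>v ols X Y (T k))"
    have dv: "dim_vec ?v = n" using X Y by simp
    have "HH ht X Y a (T k) \<subseteq> {..<dim_vec ?v}"
      using assms a1 a2 dv unfolding is_HT_def HH_def by metis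
    then show ?case using dv by (simp add: T_def)
  qed
  show "\<exists>t<2^n+2. \<not> torrent_cond ((torrent_step ht X Y a ^^ t) (torrent_init X Y))"
  proof (rule ccontr)
    assume "\<not> ?thesis"
    then have c: "\<forall>t<2^n+2. torrent_cond ((torrent_step ht X Y a ^^ t) (torrent_init X Y))" by blast
    have "\<forall>k<2^n. G (T (Suc k)) < G (T k)"
    proof (intro allI impI)
      fix k :: nat assume "k < 2^n"
      then have "Suc (Suc k) < 2^n+2" by simp
      then have "torrent_cond ((torrent_step ht X Y a ^^ Suc (Suc k)) (torrent_init X Y))" using c by blast
      then show "G (T (Suc k)) < G (T k)"
        unfolding cond_eq G_def T_def dY by simp
    qed
    then have dec: "i < j \<Longrightarrow> j \<le> 2^n \<Longrightarrow> G (T j) < G (T i)" for i j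
      using dec_lemma[of "2^n" "\<lambda>k. G (T k)"] by blast
    have inj: "inj_on T {0..2^n}"
    proof (rule inj_onI)
      fix i j assume "i \<in> {0..(2::nat)^n}" "j \<in> {0..(2::nat)^n}" "T i = T j"
      then show "i = j" using dec[of i j] dec[of j i]
        by (metis atLeastAtMost_iff less_irrefl nat_neq_iff)
    qed
    have "T ` {0..2^n} \<subseteq> Pow {..<n}" using sub by blast
    then have "card {0..(2::nat)^n} \<le> card (Pow {..<n})"
      using card_inj_on_le[OF inj] by simp
    then show False by (simp add: card_Pow)
  qed
  qed
qed

end
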